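(* Let $N\ge 1$ and $S_{<N/2}=\{x\in\{0,1\}^N : wt(x)<N/2\}$. There is a quantum algorithm that, for every $x\in S_{<N/2}$, identifies $x$ using a single parity-restricted query to the IP oracle for $x$.
   Context: $wt(\cdot)$ denotes Hamming weight. For $x\in\{0,1\}^N$, the IP (inner product) oracle is the unitary acting by $|\tilde q\rangle\mapsto(-1)^{\tilde q\cdot x}|\tilde q\rangle$ for $\tilde q\in\{0,1\}^N$, where $\tilde q\cdot x=\sum_i\tilde q_ix_i$. A query is parity-restricted if the query register is in a superposition only of strings $\tilde q$ with even Hamming weight $wt(\tilde q)$. *)

theory Defs
  imports Complex_Main
begin

text \<open>Bit strings in {0,1}^N are represented as bool lists of length N.\<close>

definition bitstrings :: "nat \<Rightarrow> bool list set" where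
  "bitstrings N = {x. length x = N}"

definition wt :: "bool list \<Rightarrow> nat" where
  "wt x = length (filter id x)"

definition ip :: "bool list \<Rightarrow> bool list \<Rightarrow> nat" where
  "ip q x = card {i. i < length q \<and> i < length x \<and> q ! i \<and> x ! i}"

definition S_lt_half :: "nat \<Rightarrow> bool list set" where
  "S_lt_half N = {x \<in> bitstrings N. real (wt x) < real N / 2}"

text \<open>Computational basis of query register tensor an m-dimensional workspace.\<close>
definition basis :: "nat \<Rightarrow> nat \<Rightarrow> (bool list \<times> nat) set" where
  "basis N m = bitstrings N \<times> {..<m}"

definition ip_oracle :: "bool list \<Rightarrow> ((bool list \<times> nat) \<Rightarrow> complex) \<Rightarrow> ((bool list \<times> nat) \<Rightarrow> complex)" where
  "ip_oracle x \<psi> = (\<lambda>(q, w). (-1) ^ ip q x * \<psi> (q, w))"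

definition is_state :: "nat \<Rightarrow> nat \<Rightarrow> ((bool list \<times> nat) \<Rightarrow> complex) \<Rightarrow> bool" where
  "is_state N m \<psi> \<longleftrightarrow> (\<forall>b. b \<notin> basis N m \<longrightarrow> \<psi> b = 0) \<and>
     (\<Sum>b\<in>basis N m. (cmod (\<psi> b))\<^sup>2) = 1"

definition parity_restricted :: "((bool list \<times> nat) \<Rightarrow> complex) \<Rightarrow> bool" where
  "parity_restricted \<psi> \<longleftrightarrow> (\<forall>q w. \<psi> (q, w) \<noteq> 0 \<longrightarrow> even (wt q))"

definition is_unitary :: "nat \<Rightarrow> nat \<Rightarrow> ((bool list \<times> nat) \<Rightarrow> (bool list \<times> nat) \<Rightarrow> complex) \<Rightarrow> bool" where
  "is_unitary N m U \<longleftrightarrow> (\<forall>c\<in>basis N m. \<forall>d\<in>basis N m.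
     (\<Sum>b\<in>basis N m. cnj (U b c) * U b d) = (if c = d then 1 else 0))"

definition apply_op :: "nat \<Rightarrow> nat \<Rightarrow> ((bool list \<times> nat) \<Rightarrow> (bool list \<times> nat) \<Rightarrow> complex)
     \<Rightarrow> ((bool list \<times> nat) \<Rightarrow> complex) \<Rightarrow> ((bool list \<times> nat) \<Rightarrow> complex)" where
  "apply_op N m U \<psi> = (\<lambda>b. \<Sum>c\<in>basis N m. U b c * \<psi> c)"

definition success_prob :: "nat \<Rightarrow> nat \<Rightarrow> ((bool list \<times> nat) \<Rightarrow> complex)
     \<Rightarrow> ((bool list \<times> nat) \<Rightarrow> (bool list \<times> nat) \<Rightarrow> complex)
     \<Rightarrow> ((bool list \<times> nat) \<Rightarrow> bool list) \<Rightarrow> bool list \<Rightarrow> real" where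
  "success_prob N m \<psi> U out x =
     (\<Sum>b\<in>{b\<in>basis N m. out b = x}. (cmod (apply_op N m U (ip_oracle x \<psi>) b))\<^sup>2)"

end

theory Submission imports Defs begin

lemma ip_sum: "ip q x = (\<Sum>i<min (length q) (length x). if q!i \<and> x!i then 1 else 0)"
proof -
  have "{i. i < length q \<and> i < length x \<and> q ! i \<and> x ! i} = {..<min (length q) (length x)} \<inter> {i. q!i \<and> x!i}" by auto
  thus ?thesis unfolding ip_def by (simp add: sum.If_cases)
qed

lemma ip_Nil1[simp]: "ip [] x = 0" by (simp add: ip_def)
lemma ip_Nil2[simp]: "ip q [] = 0" by (simp add: ip_def)
lemma ip_Cons[simp]: "ip (a#q) (b#x) = (if a \<and> b then 1 else 0) + ip q x"
  unfolding ip_sum by (simp add: sum.lessThan_Suc_shift del: sum.lessThan_Suc)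

lemma ip_sym: "ip q x = ip x q"
  unfolding ip_def by (metis (lifting) conj_commute)

lemma wt_Cons[simp]: "wt (a#q) = (if a then 1 else 0) + wt q" by (simp add: wt_def)
lemma wt_Nil[simp]: "wt [] = 0" by (simp add: wt_def)

lemma ip_compl: "length c = length x \<Longrightarrow> ip c x + ip c (map Not x) = wt c"
proof (induction c arbitrary: x)
  case (Cons a c)
  then obtain b x' where "x = b#x'" "length c = length x'" by (cases x) auto
  with Cons.IH[of x'] show ?case by auto
qed simp

lemma wt_le: "wt x \<le> length x" by (simp add: wt_def)

lemma wt_compl: "wt (map Not x) = length x - wt x"
  by (induction x) (auto simp: Suc_diff_le wt_le)

lemma bitstrings_0: "bitstrings 0 = {[]}" by (auto simp: bitstrings_def)
lemma bitstrings_Suc: "bitstrings (Suc n) = Cons True ` bitstrings n \<union> Cons False ` bitstrings n"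
  by (auto simp: bitstrings_def length_Suc_conv image_iff)

lemma finite_bitstrings[simp]: "finite (bitstrings n)"
  by (induction n) (auto simp: bitstrings_0 bitstrings_Suc)

lemma sum_bitstrings_Suc: "sum f (bitstrings (Suc n)) = (\<Sum>q\<in>bitstrings n. f (True#q)) + (\<Sum>q\<in>bitstrings n. f (False#q))"
  unfolding bitstrings_Suc
  by (subst sum.union_disjoint) (auto simp: sum.reindex)

definition chi :: "bool list \<Rightarrow> bool list \<Rightarrow> complex" where "chi q x = (-1) ^ ip q x"

lemma chi_Cons: "chi (a#q) (b#x) = (if a \<and> b then -1 else 1) * chi q x"
  by (simp add: chi_def power_add)

lemma char_sum: "c \<in> bitstrings n \<Longrightarrow> d \<in> bitstrings n \<Longrightarrow>
  (\<Sum>b\<in>bitstrings n. chi b c * chi b d) = (if c = d then 2^n else 0)"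
proof (induction n arbitrary: c d)
  case 0 thus ?case by (simp add: bitstrings_0 chi_def)
next
  case (Suc n)
  obtain a c' where c: "c = a#c'" "c' \<in> bitstrings n" using Suc.prems by (cases c) (auto simp: bitstrings_def)
  obtain e d' where d: "d = e#d'" "d' \<in> bitstrings n" using Suc.prems by (cases d) (auto simp: bitstrings_def)
  have "(\<Sum>b\<in>bitstrings (Suc n). chi b c * chi b d)
     = ((if a then -1 else 1) * (if e then -1 else 1) + 1) * (\<Sum>b\<in>bitstrings n. chi b c' * chi b d')"
    unfolding sum_bitstrings_Suc c d chi_Cons
    by (simp add: sum_distrib_left algebra_simps sum.distrib)
  also have "\<dots> = (if c = d then 2^Suc n else 0)"
    using Suc.IH[OF c(2) d(2)] c d by auto
  finally show ?case .
qed

lemma chi_sq: "chi q y * chi q y = 1"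
  by (simp add: chi_def power_add[symmetric] power_mult[symmetric] mult_2[symmetric] power_mult)

lemma chi_compl: "length q = length y \<Longrightarrow> (-1) ^ wt q * chi q y = chi q (map Not y)"
proof -
  assume l: "length q = length y"
  have "(-1::complex) ^ wt q = chi q y * chi q (map Not y)"
    using ip_compl[OF l] by (simp add: chi_def power_add[symmetric])
  hence "(-1) ^ wt q * chi q y = (chi q y * chi q y) * chi q (map Not y)" by (simp add: algebra_simps)
  thus ?thesis by (simp add: chi_sq)
qed

lemma compl_in: "y \<in> bitstrings n \<Longrightarrow> map Not y \<in> bitstrings n" by (simp add: bitstrings_def)

lemma even_ind: "(if even w then X else 0) = (X + (-1::complex)^w * X) / 2"
  by (auto simp: field_simps)

lemma even_sum:
  assumes z: "z \<in> bitstrings n" and y: "y \<in> bitstrings n"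
  shows "(\<Sum>q\<in>bitstrings n. if even (wt q) then chi q z * chi q y else 0)
     = ((if z = y then 2^n else 0) + (if z = map Not y then 2^n else 0)) / 2"
proof -
  have "(\<Sum>q\<in>bitstrings n. if even (wt q) then chi q z * chi q y else 0)
     = (\<Sum>q\<in>bitstrings n. (chi q z * chi q y + chi q z * chi q (map Not y)) / 2)"
  proof (rule sum.cong[OF refl])
    fix q assume q: "q \<in> bitstrings n"
    hence "length q = length y" using y by (simp add: bitstrings_def)
    from chi_compl[OF this] show "(if even (wt q) then chi q z * chi q y else 0) = (chi q z * chi q y + chi q z * chi q (map Not y)) / 2"
      unfolding even_ind by (simp add: algebra_simps)
  qed
  also have "\<dots> = ((\<Sum>q\<in>bitstrings n. chi q z * chi q y) + (\<Sum>q\<in>bitstrings n. chi q z * chi q (map Not y))) / 2"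
    by (simp only: sum_divide_distrib[symmetric] sum.distrib)
  also have "\<dots> = ((if z = y then 2^n else 0) + (if z = map Not y then 2^n else 0)) / 2"
    using char_sum[OF z y] char_sum[OF z compl_in[OF y]] by simp
  finally show ?thesis .
qed

lemma chi_zero: "chi q (replicate n False) = 1"
proof -
  have "ip q (replicate n False) = 0" unfolding ip_def by auto
  thus ?thesis by (simp add: chi_def)
qed

lemma card_even:
  assumes "n \<ge> 1"
  shows "card {q\<in>bitstrings n. even (wt q)} = 2^(n-1)"
proof -
  have zb: "replicate n False \<in> bitstrings n" by (simp add: bitstrings_def)
  have ne: "replicate n False \<noteq> map Not (replicate n False)" using assms by (cases n) auto
  have "of_nat (card {q\<in>bitstrings n. even (wt q)}) = (\<Sum>q\<in>bitstrings n. if even (wt q) then (1::complex) else 0)"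
    by (simp add: sum.If_cases Int_def conj_commute)
  also have "\<dots> = (\<Sum>q\<in>bitstrings n. if even (wt q) then chi q (replicate n False) * chi q (replicate n False) else 0)"
    by (rule sum.cong[OF refl]) (simp add: chi_zero)
  also have "\<dots> = 2^n / 2" using even_sum[OF zb zb] ne by simp
  also have "\<dots> = of_nat (2^(n-1))" using assms by (cases n) auto
  finally show ?thesis by (metis of_nat_eq_iff)
qed

lemma basis1: "basis N (Suc 0) = (\<lambda>q. (q, 0)) ` bitstrings N"
  by (auto simp: basis_def)

lemma sum_basis1: "sum f (basis N (Suc 0)) = (\<Sum>q\<in>bitstrings N. f (q, 0))"
  unfolding basis1 by (subst sum.reindex) (auto simp: inj_on_def)

definition psi0 :: "nat \<Rightarrow> (bool list \<times> nat) \<Rightarrow> complex" where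
  "psi0 N b = (if fst b \<in> bitstrings N \<and> snd b = 0 \<and> even (wt (fst b)) then complex_of_real (1 / sqrt (2^(N-1))) else 0)"

definition U0 :: "nat \<Rightarrow> (bool list \<times> nat) \<Rightarrow> (bool list \<times> nat) \<Rightarrow> complex" where
  "U0 N b c = chi (fst b) (fst c) / complex_of_real (sqrt (2^N))"

definition out0 :: "nat \<Rightarrow> (bool list \<times> nat) \<Rightarrow> bool list" where
  "out0 N b = (if 2 * wt (fst b) < N then fst b else map Not (fst b))"

lemma cnj_chi[simp]: "cnj (chi q x) = chi q x" by (simp add: chi_def)

lemma state0: assumes "N \<ge> 1" shows "is_state N (Suc 0) (psi0 N)"
proof -
  have "(\<Sum>b\<in>basis N (Suc 0). (cmod (psi0 N b))\<^sup>2) = (\<Sum>q\<in>bitstrings N. if even (wt q) then 1 / 2^(N-1) else 0)"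
    unfolding sum_basis1
  proof (rule sum.cong[OF refl])
    fix q assume q: "q \<in> bitstrings N"
    have "(cmod (complex_of_real (1/sqrt (2^(N-1)))))^2 = 1/2^(N-1)"
      by (simp only: norm_of_real power2_abs power_divide real_sqrt_pow2[of "2^(N-1)", simplified]) simp
    thus "(cmod (psi0 N (q, 0)))\<^sup>2 = (if even (wt q) then 1 / 2 ^ (N - 1) else 0)"
      using q by (simp add: psi0_def)
  qed
  also have "\<dots> = card {q\<in>bitstrings N. even (wt q)} * (1 / 2^(N-1))"
    by (simp add: sum.If_cases Int_def conj_commute)
  also have "\<dots> = 1" using card_even[OF assms] by simp
  moreover have "\<forall>b. b \<notin> basis N (Suc 0) \<longrightarrow> psi0 N b = 0"
    unfolding psi0_def basis_def by (auto simp: mem_Times_iff)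
  ultimately show ?thesis unfolding is_state_def by simp
qed

lemma unitary0: "is_unitary N (Suc 0) (U0 N)"
  unfolding is_unitary_def
proof (intro ballI)
  fix c d assume c: "c \<in> basis N (Suc 0)" and d: "d \<in> basis N (Suc 0)"
  have sq: "complex_of_real (sqrt (2^N)) * complex_of_real (sqrt (2^N)) = 2^N"
    by (simp flip: of_real_mult)
  have "(\<Sum>b\<in>basis N (Suc 0). cnj (U0 N b c) * U0 N b d) = (\<Sum>q\<in>bitstrings N. chi q (fst c) * chi q (fst d)) / 2^N"
    unfolding sum_basis1 sum_divide_distrib U0_def
    by (rule sum.cong[OF refl]) (simp add: sq[symmetric])
  also have "\<dots> = (if c = d then 1 else 0)"
  proof -
    have cd: "fst c \<in> bitstrings N" "fst d \<in> bitstrings N" "snd c = 0" "snd d = 0"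
      using c d by (auto simp: basis_def)
    hence "(c = d) = (fst c = fst d)" by (simp add: prod_eq_iff)
    thus ?thesis using char_sum[OF cd(1,2)] by simp
  qed
  finally show "(\<Sum>b\<in>basis N (Suc 0). cnj (U0 N b c) * U0 N b d) = (if c = d then 1 else 0)" .
qed

lemma parity0: "parity_restricted (psi0 N)"
  unfolding parity_restricted_def psi0_def by auto

definition kap :: "nat \<Rightarrow> real" where
  "kap N = (2^N/2) / (sqrt (2^N) * sqrt (2^(N-1)))"

lemma kap_sq: "N \<ge> 1 \<Longrightarrow> (kap N)^2 = 1/2"
proof -
  assume "N \<ge> 1"
  then obtain M where N: "N = Suc M" by (cases N) auto
  have "(kap N)^2 = (2^N/2)^2 / (2^N * 2^(N-1))"
    unfolding kap_def by (simp add: power_divide power_mult_distrib)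
  also have "\<dots> = 1/2" unfolding N by (simp add: power2_eq_square)
  finally show ?thesis .
qed

lemma amp:
  assumes x: "x \<in> bitstrings N" and z: "z \<in> bitstrings N"
  shows "apply_op N (Suc 0) (U0 N) (ip_oracle x (psi0 N)) (z, w)
     = ((if z = x then 1 else 0) + (if z = map Not x then 1 else 0)) * complex_of_real (kap N)"
proof -
  let ?r = "complex_of_real (sqrt (2^N))" and ?t = "complex_of_real (sqrt (2^(N-1)))"
  have "apply_op N (Suc 0) (U0 N) (ip_oracle x (psi0 N)) (z, w)
      = (\<Sum>q\<in>bitstrings N. (if even (wt q) then chi q z * chi q x else 0) / (?r * ?t))"
    unfolding apply_op_def sum_basis1
  proof (rule sum.cong[OF refl])
    fix q assume q: "q \<in> bitstrings N"
    show "U0 N (z, w) (q, 0) * ip_oracle x (psi0 N) (q, 0) = (if even (wt q) then chi q z * chi q x else 0) / (?r * ?t)"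
      using q by (simp add: U0_def ip_oracle_def psi0_def chi_def ip_sym[of z q])
  qed
  also have "\<dots> = (\<Sum>q\<in>bitstrings N. (if even (wt q) then chi q z * chi q x else 0)) / (?r * ?t)"
    by (simp only: sum_divide_distrib)
  also have "\<dots> = ((if z = x then 2^N else 0) + (if z = map Not x then 2^N else 0)) / 2 / (?r * ?t)"
    by (simp only: even_sum[OF z x])
  also have "\<dots> = ((if z = x then 1 else 0) + (if z = map Not x then 1 else 0)) * complex_of_real (kap N)"
    unfolding kap_def by (simp add: field_simps)
  finally show ?thesis .
qed

lemma success0:
  assumes N: "N \<ge> 1" and xS: "x \<in> S_lt_half N"
  shows "success_prob N (Suc 0) (psi0 N) (U0 N) (out0 N) x = 1"
proof -
  have x: "x \<in> bitstrings N" and wx: "2 * wt x < N" using xS by (auto simp: S_lt_half_def)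
  have lx: "length x = N" using x by (simp add: bitstrings_def)
  have nx: "map Not x \<in> bitstrings N" using x by (simp add: bitstrings_def)
  have ne: "x \<noteq> map Not x" using N lx by (cases x) auto
  have o1: "out0 N (x, 0) = x" using wx by (simp add: out0_def)
  have o2: "out0 N (map Not x, 0) = x" proof -
    have "\<not> 2 * wt (map Not x) < N" using wx lx wt_compl[of x] by simp
    thus ?thesis by (simp add: out0_def comp_def)
  qed
  define Q where "Q = {q\<in>bitstrings N. out0 N (q, 0) = x}"
  define f where "f q = (if q = x \<or> q = map Not x then (1::real)/2 else 0)" for q
  have set: "{b\<in>basis N (Suc 0). out0 N b = x} = (\<lambda>q. (q, 0)) ` Q"
    unfolding Q_def basis_def by auto
  have "success_prob N (Suc 0) (psi0 N) (U0 N) (out0 N) x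
      = (\<Sum>q\<in>Q. (cmod (apply_op N (Suc 0) (U0 N) (ip_oracle x (psi0 N)) (q, 0)))\<^sup>2)"
    unfolding success_prob_def set by (subst sum.reindex) (auto simp: inj_on_def)
  also have "\<dots> = sum f Q"
  proof (rule sum.cong[OF refl])
    fix q assume "q \<in> Q"
    hence q: "q \<in> bitstrings N" by (simp add: Q_def)
    show "(cmod (apply_op N (Suc 0) (U0 N) (ip_oracle x (psi0 N)) (q, 0)))\<^sup>2 = f q"
      unfolding amp[OF x q] f_def using ne kap_sq[OF N] by auto
  qed
  also have "\<dots> = sum f {x, map Not x}"
    by (rule sum.mono_neutral_right) (auto simp: Q_def x nx o1 o2 f_def)
  also have "\<dots> = 1" using ne by (simp add: f_def)
  finally show ?thesis .
qed

theorem lemma1: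
  fixes N :: nat
  assumes "N \<ge> 1"
  shows "\<exists>m \<psi> U out. m \<ge> 1 \<and> is_state N m \<psi> \<and> parity_restricted \<psi> \<and> is_unitary N m U \<and>
           (\<forall>x\<in>S_lt_half N. success_prob N m \<psi> U out x = 1)"
proof (intro exI conjI ballI)
  show "1 \<le> Suc 0" by simp
  show "is_state N (Suc 0) (psi0 N)" by (rule state0[OF assms])
  show "parity_restricted (psi0 N)" by (rule parity0)
  show "is_unitary N (Suc 0) (U0 N)" by (rule unitary0)
  fix x assume "x \<in> S_lt_half N"
  thus "success_prob N (Suc 0) (psi0 N) (U0 N) (out0 N) x = 1" by (rule success0[OF assms])
qed

end
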